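(* Let $m,n\in\mathbb Z^+\cup\{\infty\}$ with $m<n$, let $k=14$ and $\ell_i=14^i$ for $i\in\mathbb N$, and let $(p_j)$, $(q_j)$ be increasing sequences of positive integers with $p_j\ge |P_{(m,j)}|-1$ and $q_j\ge|P_{(n,j)}|-1$. Let $U_A=\{u_i\}\subset\{a,x\}_\circ^*$ with $u_i=\big(a^{14^{p_j-r_i}}x^{14^{p_j-r_i}}\big)^{14^{r_i+1}}$ for $i\in P_{(m,j)}$, $r_i=i-\min P_{(m,j)}$, and $V_B=\{v_i\}\subset\{b,y\}_\circ^*$ with $v_i=\big(b^{14^{q_j-r'_i}}y^{14^{q_j-r'_i}}\big)^{14^{r'_i+1}}$ for $i\in P_{(n,j)}$, $r'_i=i-\min P_{(n,j)}$ (where $a,x,b,y$ are four distinct letters). Suppose that for all $i,j\in\mathbb N$: (a) $p_{j+1}\ge p_j+(j+2)m$; (b) $q_{j+1}\ge q_j+(j+2)n$ if $n\in\mathbb Z^+$, and $q_{j+1}\ge q_j+(j+2)^2$ if $n=\infty$; (c) $p_{\lfloor i/m\rfloor}\le q_{\lfloor i/n\rfloor}$ if $n\in\mathbb Z^+$, and $p_{\lfloor i/m\rfloor}\le q_{\lfloor\sqrt i\rfloor}$ if $n=\infty$. Then, with $\lambda=1/13$, for all $i,i',j\in\mathbb N$: (1) $U_A$ and $V_B$ are cyclically minimal, cyclically reduced, and satisfy $C'(\lambda)$; (2) for all $h\in\mathbb Z$, every piece $p$ of $y^h$ and $v_i$ has $|p|<\lambda|v_i|$; (3) $2\le|u_i|\le|v_i|$;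 (4) $u_i=u_{i'}$ or $v_i=v_{i'}$ implies $i=i'$; (5) $(|u_i|)$ is constant on each block $P_{(m,j)}$ and $(|v_i|)$ is constant on each block $P_{(n,j)}$; (6) $|u_{(j+1)m}|\ge\ell_{(j+1)m}|u_{jm}|$; and $|v_{(j+1)n}|\ge\ell_{(j+1)n}|v_{jn}|$ if $n\in\mathbb Z^+$, while $|v_{(j+1)^2}|\ge\ell_{(j+1)^2}|v_{j^2}|$ if $n=\infty$.
   Context: For $m\in\mathbb Z^+$ let $P_{(m,j)}=\{jm,\dots,(j+1)m-1\}$ and for $m=\infty$ let $P_{(\infty,j)}=\{j^2,\dots,(j+1)^2-1\}$ ($j\in\mathbb N$). Words: $S_\circ=S\cup S^{-1}\cup\{1\}$, words in $S_\circ^*$, $|w|$ length; a word is reduced if it has no subword $1$, $ss^{-1}$, $s^{-1}s$. $R_*$ is the closure of $R$ under cyclic shifts and formal inverses; $R$ is cyclically reduced if every element of $R_*$ is reduced, cyclically minimal if $R\cap\{r\}_*=\{r\}$ for each $r\in R$. A piece of $u,v$ is a common prefix of some $u'\in\{u\}_*$, $v'\in\{v\}_*$. $R$ satisfies $C'(\lambda)$ if whenever $u,v\in R$ and $u'\in\{u\}_*$, $v'\in\{v\}_*$ have common prefix $p$, either $u'=v'$ or $|p|<\lambda\min(|u|,|v|)$. *)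

theory Defs
  imports Complex_Main "HOL-Library.Sublist" "HOL-Library.Extended_Nat"
begin

text \<open>Letters of S_o = S \<union> S^-1 \<union> {1}.\<close>
datatype 'g letter = Gen 'g | Inv 'g | One

type_synonym 'g word = "'g letter list"

fun letter_inv :: "'g letter \<Rightarrow> 'g letter" where
  "letter_inv (Gen s) = Inv s"
| "letter_inv (Inv s) = Gen s"
| "letter_inv One = One"

definition word_inv :: "'g word \<Rightarrow> 'g word" where
  "word_inv w = rev (map letter_inv w)"

definition reduced :: "'g word \<Rightarrow> bool" where
  "reduced w \<longleftrightarrow> \<not> sublist [One] w \<and>
     (\<forall>s. \<not> sublist [Gen s, Inv s] w \<and> \<not> sublist [Inv s, Gen s] w)"

inductive_set cyc_closure :: "'g word set \<Rightarrow> 'g word set" for R where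
  base: "r \<in> R \<Longrightarrow> r \<in> cyc_closure R"
| shift: "w \<in> cyc_closure R \<Longrightarrow> rotate1 w \<in> cyc_closure R"
| inverse: "w \<in> cyc_closure R \<Longrightarrow> word_inv w \<in> cyc_closure R"

definition cyc_reduced :: "'g word set \<Rightarrow> bool" where
  "cyc_reduced R \<longleftrightarrow> (\<forall>w \<in> cyc_closure R. reduced w)"

definition cyc_minimal :: "'g word set \<Rightarrow> bool" where
  "cyc_minimal R \<longleftrightarrow> (\<forall>r \<in> R. R \<inter> cyc_closure {r} = {r})"

definition is_piece :: "'g word \<Rightarrow> 'g word \<Rightarrow> 'g word \<Rightarrow> bool" where
  "is_piece p u v \<longleftrightarrow> (\<exists>u' \<in> cyc_closure {u}. \<exists>v' \<in> cyc_closure {v}.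
      prefix p u' \<and> prefix p v')"

definition small_cancel :: "real \<Rightarrow> 'g word set \<Rightarrow> bool" where
  "small_cancel lam R \<longleftrightarrow> (\<forall>u \<in> R. \<forall>v \<in> R. \<forall>u' \<in> cyc_closure {u}. \<forall>v' \<in> cyc_closure {v}.
      \<forall>p. prefix p u' \<and> prefix p v' \<longrightarrow>
        u' = v' \<or> real (length p) < lam * real (min (length u) (length v)))"

fun blockP :: "enat \<Rightarrow> nat \<Rightarrow> nat set" where
  "blockP (enat m) j = {j * m ..< (j + 1) * m}"
| "blockP \<infinity> j = {j ^ 2 ..< (j + 1) ^ 2}"

definition wpow :: "'g word \<Rightarrow> nat \<Rightarrow> 'g word" where
  "wpow w k = concat (replicate k w)"

definition gpow :: "'g \<Rightarrow> int \<Rightarrow> 'g word" where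
  "gpow s h = (if h \<ge> 0 then replicate (nat h) (Gen s) else replicate (nat (- h)) (Inv s))"

end

theory Submission
  imports Defs
begin



definition F :: "nat \<Rightarrow> 'g \<Rightarrow> 'g \<Rightarrow> int \<Rightarrow> 'g" where
  "F L c d t = (if t mod (2 * int L) < int L then c else d)"

definition wd :: "nat \<Rightarrow> 'g \<Rightarrow> 'g \<Rightarrow> nat \<Rightarrow> 'g word" where
  "wd L c d k = wpow (replicate L (Gen c) @ replicate L (Gen d)) k"

lemma F_cong: "t mod (2 * int L) = t' mod (2 * int L) \<Longrightarrow> F L c d t = F L c d t'"
  by (simp add: F_def)

lemma length_wd: "length (wd L c d k) = 2*L*k"
  by (simp add: wd_def wpow_def length_concat sum_list_replicate)

lemma nth_wd: "i < 2*L*k \<Longrightarrow> wd L c d k ! i = Gen (F L c d (int i))"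
proof (induction k arbitrary: i)
  case 0 then show ?case by simp
next
  case (Suc k)
  have e: "wd L c d (Suc k) = (replicate L (Gen c) @ replicate L (Gen d)) @ wd L c d k"
    by (simp add: wd_def wpow_def)
  show ?case
  proof (cases "i < 2*L")
    case True
    then show ?thesis unfolding e
      by (auto simp: nth_append F_def)
  next
    case False
    then have "i - 2*L < 2*L*k" using Suc.prems by auto
    then have "wd L c d k ! (i - 2*L) = Gen (F L c d (int (i - 2*L)))" by (rule Suc.IH)
    moreover have "F L c d (int (i - 2*L)) = F L c d (int i)"
      using False by (intro F_cong) (simp add: of_nat_diff mod_diff_right_eq[symmetric])
    moreover have "((replicate L (Gen c) @ replicate L (Gen d)) @ wd L c d k) ! i = wd L c d k ! (i - 2*L)"
      using False by (subst nth_append_right) (auto simp: mult_2)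
    ultimately show ?thesis unfolding e by simp
  qed
qed

lemma F_neg: "0 < L \<Longrightarrow> F L c d (-t) = F L c d (t - 1 + int L)"
proof -
  assume L: "0 < L"
  define M where "M = 2 * int L"
  define r where "r = t mod M"
  have M: "M > 0" using L by (simp add: M_def)
  have r: "0 \<le> r" "r < M" using M by (auto simp: r_def)
  have t: "t = M * (t div M) + r" by (simp add: r_def)
  have a: "(-t) mod M = (-r) mod M" by (metis mod_minus_eq r_def)
  have b: "(t - 1 + int L) mod M = (r - 1 + int L) mod M"
    by (metis mod_add_left_eq mod_diff_left_eq r_def)
  have c1: "((-r) mod M < int L) = (r = 0 \<or> r > int L)"
  proof (cases "r = 0")
    case True then show ?thesis using M L by simp
  next
    case False
    then have "(-r) mod M = M - r" using r by (simp add: zmod_zminus1_eq_if)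
    then show ?thesis using False M_def by auto
  qed
  have c2: "((r - 1 + int L) mod M < int L) = (r = 0 \<or> r > int L)"
  proof (cases "r \<le> int L")
    case True
    then have "(r - 1 + int L) mod M = r - 1 + int L" using r L M_def
      by (intro mod_pos_pos_trivial) auto
    then show ?thesis using True L r by auto
  next
    case False
    have "(r - 1 + int L) mod M = (r - 1 - int L + M) mod M" unfolding M_def by (rule arg_cong[where f="\<lambda>z. z mod (2 * int L)"]) simp
    also have "\<dots> = (r - 1 - int L) mod M" by simp
    also have "\<dots> = r - 1 - int L" using r L M_def False by (intro mod_pos_pos_trivial) auto
    finally have "(r - 1 + int L) mod M = r - 1 - int L" .
    then show ?thesis using False r M_def by auto
  qed
  show ?thesis unfolding F_def M_def[symmetric] using a b c1 c2 by simp
qed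




lemma mod_helper: "(M::int) dvd N \<Longrightarrow> (x mod N + s) mod M = (x + s) mod M"
  by (metis mod_add_left_eq mod_mod_cancel)

lemma closure_form:
  assumes "w \<in> cyc_closure {wd L c d k}" "0 < L" "0 < k"
  shows "length w = 2*L*k \<and> (\<exists>s. (\<forall>i<2*L*k. w!i = Gen (F L c d (int i + s)))
            \<or> (\<forall>i<2*L*k. w!i = Inv (F L c d (int i + s))))"
  using assms(1)
proof induction
  case (base r)
  then show ?case by (auto simp: length_wd nth_wd intro!: exI[of _ 0])
next
  case (shift w)
  define N where "N = 2*L*k"
  have dv: "2 * int L dvd int N" by (simp add: N_def)
  have len: "length w = N" using shift N_def by simp
  have key: "F L c d (int (Suc i mod N) + s) = F L c d (int i + (s+1))" for i s
    apply (intro F_cong)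
    apply (simp only: of_nat_mod mod_helper[OF dv])
    by (simp add: algebra_simps)
  from shift obtain s where s: "(\<forall>i<N. w!i = Gen (F L c d (int i + s)))
            \<or> (\<forall>i<N. w!i = Inv (F L c d (int i + s)))" unfolding N_def by blast
  have Np: "0 < N" using assms N_def by simp
  from s have "(\<forall>i<N. rotate1 w!i = Gen (F L c d (int i + (s+1))))
            \<or> (\<forall>i<N. rotate1 w!i = Inv (F L c d (int i + (s+1))))"
    using len Np by (auto simp: nth_rotate1 key[symmetric])
  then show ?case using len N_def by auto
next
  case (inverse w)
  define N where "N = 2*L*k"
  have len: "length w = N" using inverse N_def by simp
  have key: "F L c d (int (N - Suc i) + s) = F L c d (int i + (int L - int N - s))" if "i < N" for i s
  proof -
    have "F L c d (int (N - Suc i) + s) = F L c d (- (int i + 1 - int N - s))"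
      using that by (simp add: of_nat_diff algebra_simps)
    also have "\<dots> = F L c d (int i + (int L - int N - s))"
      by (subst F_neg[OF assms(2)]) (simp add: algebra_simps)
    finally show ?thesis .
  qed
  from inverse obtain s where s: "(\<forall>i<N. w!i = Gen (F L c d (int i + s)))
            \<or> (\<forall>i<N. w!i = Inv (F L c d (int i + s)))" unfolding N_def by blast
  have lw: "length (word_inv w) = N" using len by (simp add: word_inv_def)
  from s have "(\<forall>i<N. word_inv w!i = Gen (F L c d (int i + (int L - int N - s))))
            \<or> (\<forall>i<N. word_inv w!i = Inv (F L c d (int i + (int L - int N - s))))"
    using len by (auto simp: word_inv_def rev_nth key[symmetric])
  then show ?case using lw N_def by auto
qed

lemma F_change: assumes "0 < L" "c \<noteq> d"
  shows "(F L c d x \<noteq> F L c d (x - 1)) \<longleftrightarrow> x mod int L = 0"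
proof -
  define M where "M = 2 * int L"
  define r where "r = x mod M"
  have M: "M > 0" using assms by (simp add: M_def)
  have r: "0 \<le> r" "r < M" using M by (auto simp: r_def)
  have a: "(x - 1) mod M = (if r = 0 then M - 1 else r - 1)"
  proof (cases "r = 0")
    case True
    then have "(x - 1) mod M = (0 - 1) mod M" by (metis mod_diff_left_eq r_def)
    also have "\<dots> = M - 1" using assms M_def by (simp add: zmod_zminus1_eq_if)
    finally show ?thesis using True by simp
  next
    case False
    then have "(x - 1) mod M = (r - 1) mod M" by (metis mod_diff_left_eq r_def)
    also have "\<dots> = r - 1" using r False by (intro mod_pos_pos_trivial) auto
    finally show ?thesis using False by simp
  qed
  have b: "x mod int L = r mod int L"
    unfolding r_def M_def by (simp add: mod_mod_cancel)
  have c: "r mod int L = 0 \<longleftrightarrow> r = 0 \<or> r = int L"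
  proof (cases "r < int L")
    case True then show ?thesis using r by auto
  next
    case False
    then have "r mod int L = (r - int L) mod int L" by (simp add: mod_diff_right_eq[symmetric])
    also have "\<dots> = r - int L" using r False M_def by (intro mod_pos_pos_trivial) auto
    finally show ?thesis using False by auto
  qed
  show ?thesis unfolding F_def M_def[symmetric] r_def[symmetric] a b c
    using assms r M_def by auto
qed




definition mk :: "bool \<Rightarrow> 'g \<Rightarrow> 'g letter" where
  "mk b z = (if b then Gen z else Inv z)"

lemma mk_inj[simp]: "mk b z = mk b' z' \<longleftrightarrow> b = b' \<and> z = z'"
  by (auto simp: mk_def)

lemma closure_form2:
  assumes "w \<in> cyc_closure {wd L c d k}" "0 < L" "0 < k"
  shows "length w = 2*L*k \<and> (\<exists>s b. \<forall>i<2*L*k. w!i = mk b (F L c d (int i + s)))"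
proof -
  from closure_form[OF assms] obtain s where
    "length w = 2*L*k" "(\<forall>i<2*L*k. w!i = Gen (F L c d (int i + s)))
            \<or> (\<forall>i<2*L*k. w!i = Inv (F L c d (int i + s)))" by blast
  then show ?thesis
  proof (cases "\<forall>i<2*L*k. w!i = Gen (F L c d (int i + s))")
    case True
    then have "\<forall>i<2*L*k. w!i = mk True (F L c d (int i + s))" by (simp add: mk_def)
    then show ?thesis using \<open>length w = 2*L*k\<close> by blast
  next
    case False
    then have "\<forall>i<2*L*k. w!i = mk False (F L c d (int i + s))"
      using \<open>_ \<or> _\<close> unfolding mk_def by (metis (lifting))
    then show ?thesis using \<open>length w = 2*L*k\<close> by blast
  qed
qed

lemma prefix_nth: "prefix p w \<Longrightarrow> i < length p \<Longrightarrow> p ! i = w ! i"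
  by (auto simp: prefix_def nth_append)

lemma seq_eq:
  assumes "0 < L" "\<forall>i<2*L. F L c d (int i + s1) = F L c d (int i + s2)"
  shows "F L c d (t + s1) = F L c d (t + s2)"
proof -
  define i where "i = nat (t mod (2 * int L))"
  have ii: "int i = t mod (2 * int L)" using assms by (simp add: i_def)
  have il: "i < 2*L" using assms i_def by (simp add: nat_less_iff)
  have "F L c d (t + s1) = F L c d (int i + s1)"
    by (intro F_cong) (simp add: ii mod_add_left_eq)
  also have "\<dots> = F L c d (int i + s2)" using assms il by blast
  also have "\<dots> = F L c d (t + s2)"
    by (intro F_cong) (simp add: ii mod_add_left_eq)
  finally show ?thesis .
qed

lemma seq_neq:
  assumes "0 < L1" "L1 < L2" "c \<noteq> d"
    and H: "\<forall>i\<le>2*L1. F L1 c d (int i + s1) = F L2 c d (int i + s2)"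
  shows False
proof -
  have H': "F L1 c d (x + s1) = F L2 c d (x + s2)" if "0 \<le> x" "x \<le> 2 * int L1" for x
    using H[rule_format, of "nat x"] that by simp
  define i1 where "i1 = int L1 - s1 mod int L1"
  have i1: "1 \<le> i1" "i1 \<le> int L1" using assms unfolding i1_def
    by (auto simp: int_one_le_iff_zero_less)
  have m1: "(i1 + s1) mod int L1 = 0"
  proof -
    have "i1 + s1 = int L1 * (1 + s1 div int L1)" unfolding i1_def
      by (simp add: algebra_simps minus_mod_eq_mult_div)
    then show ?thesis by simp
  qed
  have m2: "(i1 + int L1 + s1) mod int L1 = 0"
    using m1 by (metis add.commute add.left_commute mod_add_self2)
  have ch: "(x + s2) mod int L2 = 0" if "(x + s1) mod int L1 = 0" "1 \<le> x" "x \<le> 2 * int L1" for x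
  proof -
    have "F L1 c d (x + s1) \<noteq> F L1 c d (x + s1 - 1)"
      using F_change[of L1 c d] assms that by simp
    moreover have "F L1 c d (x + s1) = F L2 c d (x + s2)" using H' that by simp
    moreover have "F L1 c d ((x - 1) + s1) = F L2 c d ((x - 1) + s2)" using H' that by simp
    ultimately have "F L2 c d (x + s2) \<noteq> F L2 c d (x + s2 - 1)" by (simp add: algebra_simps)
    then show ?thesis using F_change[of L2 c d] assms by simp
  qed
  have d1: "int L2 dvd (i1 + s2)" using ch[OF m1] i1 by (simp add: dvd_eq_mod_eq_0)
  have d2: "int L2 dvd (i1 + int L1 + s2)"
    using ch[of "i1 + int L1"] m2 i1 by (simp add: dvd_eq_mod_eq_0 algebra_simps)
  have "int L2 dvd int L1" using dvd_diff[OF d2 d1] by simp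
  then have "L2 dvd L1" by simp
  then show False using assms by (auto dest: dvd_imp_le)
qed

lemma pair_eq:
  assumes "w1 \<in> cyc_closure {wd L c d k}" "w2 \<in> cyc_closure {wd L c d k}" "0 < L" "0 < k"
    "prefix p w1" "prefix p w2" "2*L \<le> length p"
  shows "w1 = w2"
proof -
  obtain s1 b1 where 1: "length w1 = 2*L*k" "\<forall>i<2*L*k. w1!i = mk b1 (F L c d (int i + s1))"
    using closure_form2[OF assms(1,3,4)] by blast
  obtain s2 b2 where 2: "length w2 = 2*L*k" "\<forall>i<2*L*k. w2!i = mk b2 (F L c d (int i + s2))"
    using closure_form2[OF assms(2,3,4)] by blast
  have lp: "length p \<le> 2*L*k" using prefix_length_le[OF assms(5)] 1 by simp
  have eq: "w1 ! i = w2 ! i" if "i < 2*L" for i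
    using prefix_nth[OF assms(5), of i] prefix_nth[OF assms(6), of i] that assms(7) by simp
  have LL: "2*L \<le> 2*L*k" using assms by simp
  have e0: "w1!0 = w2!0" using eq assms(3) by simp
  have bb: "b1 = b2"
    using 1(2)[rule_format, of 0] 2(2)[rule_format, of 0] e0 LL assms(3) by simp
  have ff: "\<forall>i<2*L. F L c d (int i + s1) = F L c d (int i + s2)"
  proof (intro allI impI)
    fix i assume i: "i < 2*L"
    then have "i < 2*L*k" using LL by linarith
    then show "F L c d (int i + s1) = F L c d (int i + s2)"
      using 1(2)[rule_format, of i] 2(2)[rule_format, of i] eq[OF i] by simp
  qed
  show ?thesis
  proof (rule nth_equalityI)
    show "length w1 = length w2" using 1 2 by simp
    fix i assume "i < length w1"
    then show "w1 ! i = w2 ! i" using 1 2 bb seq_eq[OF assms(3) ff] by simp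
  qed
qed

lemma pair_lt:
  assumes "w1 \<in> cyc_closure {wd L1 c d k1}" "w2 \<in> cyc_closure {wd L2 c d k2}"
    "0 < L1" "L1 < L2" "0 < k1" "0 < k2" "c \<noteq> d"
    "prefix p w1" "prefix p w2"
  shows "length p \<le> 2*L1"
proof (rule ccontr)
  assume A: "\<not> length p \<le> 2*L1"
  have L2: "0 < L2" using assms by simp
  obtain s1 b1 where 1: "length w1 = 2*L1*k1" "\<forall>i<2*L1*k1. w1!i = mk b1 (F L1 c d (int i + s1))"
    using closure_form2[OF assms(1,3,5)] by blast
  obtain s2 b2 where 2: "length w2 = 2*L2*k2" "\<forall>i<2*L2*k2. w2!i = mk b2 (F L2 c d (int i + s2))"
    using closure_form2[OF assms(2) L2 assms(6)] by blast
  have lp: "length p \<le> 2*L1*k1" "length p \<le> 2*L2*k2"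
    using prefix_length_le[OF assms(8)] prefix_length_le[OF assms(9)] 1 2 by auto
  have "\<forall>i\<le>2*L1. F L1 c d (int i + s1) = F L2 c d (int i + s2)"
  proof (intro allI impI)
    fix i assume "i \<le> 2*L1"
    then have i: "i < length p" using A by simp
    have "w1 ! i = w2 ! i"
      using prefix_nth[OF assms(8) i] prefix_nth[OF assms(9) i] by simp
    moreover have "i < 2*L1*k1" "i < 2*L2*k2" using lp i by linarith+
    ultimately show "F L1 c d (int i + s1) = F L2 c d (int i + s2)"
      using 1(2)[rule_format, of i] 2(2)[rule_format, of i] by simp
  qed
  then show False by (rule seq_neq[OF assms(3,4,7)])
qed

lemma gpow_closure: "w \<in> cyc_closure {gpow y h} \<Longrightarrow> \<exists>b. w = replicate (nat \<bar>h\<bar>) (mk b y)"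
proof (induction rule: cyc_closure.induct)
  case (base r)
  then show ?case unfolding gpow_def mk_def
    by (cases "h \<ge> 0") (auto intro: exI[of _ True] exI[of _ False])
next
  case (shift w) then show ?case by auto
next
  case (inverse w)
  then obtain b where "w = replicate (nat \<bar>h\<bar>) (mk b y)" by blast
  then have "word_inv w = replicate (nat \<bar>h\<bar>) (mk (\<not>b) y)"
    by (simp add: word_inv_def mk_def)
  then show ?case by blast
qed

lemma piece_y:
  assumes "w1 \<in> cyc_closure {gpow y h}" "w2 \<in> cyc_closure {wd L c y k}" "0 < L" "0 < k" "c \<noteq> y"
    "prefix p w1" "prefix p w2"
  shows "length p \<le> L"
proof (rule ccontr)
  assume A: "\<not> length p \<le> L"
  obtain b where 1: "w1 = replicate (nat \<bar>h\<bar>) (mk b y)" using gpow_closure[OF assms(1)] by blast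
  obtain s b2 where 2: "length w2 = 2*L*k" "\<forall>i<2*L*k. w2!i = mk b2 (F L c y (int i + s))"
    using closure_form2[OF assms(2,3,4)] by blast
  have lp: "length p \<le> length w1" "length p \<le> 2*L*k"
    using prefix_length_le[OF assms(6)] prefix_length_le[OF assms(7)] 2 by auto
  have allY: "F L c y (int i + s) = y" if "i \<le> L" for i
  proof -
    have i: "i < length p" using A that by simp
    have "w1 ! i = w2 ! i"
      using prefix_nth[OF assms(6) i] prefix_nth[OF assms(7) i] by simp
    moreover have "i < 2*L*k" using lp i by linarith
    ultimately show ?thesis using 1 2(2)[rule_format, of i] i lp by simp
  qed
  define r where "r = s mod (2 * int L)"
  have r: "0 \<le> r" "r < 2 * int L" using assms by (auto simp: r_def)
  show False
  proof (cases "r < int L")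
    case True
    then have "F L c y (int 0 + s) = c" by (simp add: F_def r_def)
    then show False using allY[of 0] assms by simp
  next
    case False
    define i where "i = nat (2 * int L - r)"
    have ii: "int i = 2 * int L - r" using r by (simp add: i_def)
    have iL: "i \<le> L" using False ii by simp
    have "(int i + s) mod (2 * int L) = 0"
    proof -
      have "(int i + s) mod (2 * int L) = (int i + r) mod (2 * int L)"
        by (simp add: r_def mod_add_right_eq)
      also have "\<dots> = 0" by (simp add: ii)
      finally show ?thesis .
    qed
    then have "F L c y (int i + s) = c" using assms by (simp add: F_def)
    then show False using allY[OF iL] assms by simp
  qed
qed




lemma closure_union: "w \<in> cyc_closure R \<Longrightarrow> \<exists>r\<in>R. w \<in> cyc_closure {r}"
  by (induction rule: cyc_closure.induct) (blast intro: cyc_closure.intros)+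

lemma reduced_wd:
  assumes "w \<in> cyc_closure {wd L c d k}" "0 < L" "0 < k"
  shows "reduced w"
proof -
  obtain s b where 1: "length w = 2*L*k" "\<forall>i<2*L*k. w!i = mk b (F L c d (int i + s))"
    using closure_form2[OF assms] by blast
  have st: "\<exists>e. z = mk b e" if "z \<in> set w" for z
    using that 1 by (auto simp: in_set_conv_nth)
  show ?thesis unfolding reduced_def
  proof (intro conjI allI notI)
    assume "sublist [One] w"
    then have "One \<in> set w" using set_mono_sublist by fastforce
    then show False using st[of One] by (cases b) (auto simp: mk_def)
  next
    fix s assume "sublist [Gen s, Inv s] w"
    then have "Gen s \<in> set w" "Inv s \<in> set w" using set_mono_sublist by fastforce+
    then show False using st[of "Gen s"] st[of "Inv s"] by (auto simp: mk_def split: if_splits)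
  next
    fix s assume "sublist [Inv s, Gen s] w"
    then have "Gen s \<in> set w" "Inv s \<in> set w" using set_mono_sublist by fastforce+
    then show False using st[of "Gen s"] st[of "Inv s"] by (auto simp: mk_def split: if_splits)
  qed
qed

lemma len_closure: "w \<in> cyc_closure {r} \<Longrightarrow> length w = length r"
  by (induction rule: cyc_closure.induct) (auto simp: word_inv_def)

locale fam =
  fixes w :: "nat \<Rightarrow> 'g word" and Lf K :: "nat \<Rightarrow> nat" and c d :: 'g
  assumes wdef: "\<And>i. w i = wd (Lf i) c d (K i)" and Lpos: "\<And>i. 0 < Lf i"
    and K14: "\<And>i. 14 \<le> K i" and injL: "inj Lf" and cd: "c \<noteq> d"
begin

lemma Kpos: "0 < K i" using K14[of i] by simp

lemma lenw: "length (w i) = 2 * Lf i * K i" by (simp add: wdef length_wd)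

lemma big: "28 * Lf i \<le> length (w i)"
proof -
  have "28 * Lf i = 2 * Lf i * 14" by simp
  also have "\<dots> \<le> 2 * Lf i * K i" using K14[of i] by (intro mult_le_mono2)
  finally show ?thesis by (simp add: lenw)
qed

lemma same_L: assumes "w i' \<in> cyc_closure {w i}" shows "i' = i"
proof (rule ccontr)
  assume ne: "i' \<noteq> i"
  then have ne': "Lf i \<noteq> Lf i'" using injL by (auto dest: injD)
  have self: "w i' \<in> cyc_closure {w i'}" by (rule cyc_closure.base) simp
  have lw: "length (w i') = length (w i)" using len_closure[OF assms] .
  show False
  proof (cases "Lf i < Lf i'")
    case True
    have "length (w i') \<le> 2 * Lf i"
      using pair_lt[of "w i'" "Lf i" c d "K i" "w i'" "Lf i'" "K i'" "w i'"] assms self True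
        Lpos Kpos cd by (simp add: wdef)
    then show False using big[of i] lw Lpos[of i] by linarith
  next
    case False
    then have F: "Lf i' < Lf i" using ne' by simp
    have "length (w i') \<le> 2 * Lf i'"
      using pair_lt[of "w i'" "Lf i'" c d "K i'" "w i'" "Lf i" "K i" "w i'"] assms self F
        Lpos Kpos cd by (simp add: wdef)
    then show False using big[of i'] Lpos[of i'] by linarith
  qed
qed

lemma results: "cyc_minimal (range w) \<and> cyc_reduced (range w) \<and> small_cancel (1/13) (range w)
   \<and> (\<forall>i i'. w i = w i' \<longrightarrow> i = i')"
proof (intro conjI)
  show "cyc_minimal (range w)" unfolding cyc_minimal_def
  proof
    fix r assume "r \<in> range w"
    then obtain i where r: "r = w i" by blast
    have "r \<in> cyc_closure {r}" by (rule cyc_closure.base) simp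
    moreover have "z = r" if "z \<in> range w" "z \<in> cyc_closure {r}" for z
      using that same_L r by blast
    ultimately show "range w \<inter> cyc_closure {r} = {r}" using \<open>r \<in> range w\<close> by blast
  qed
  show "cyc_reduced (range w)" unfolding cyc_reduced_def
  proof
    fix z assume "z \<in> cyc_closure (range w)"
    then obtain i where "z \<in> cyc_closure {w i}" using closure_union by blast
    then show "reduced z" using reduced_wd[OF _ Lpos Kpos] by (simp add: wdef)
  qed
  show "\<forall>i i'. w i = w i' \<longrightarrow> i = i'"
  proof (intro allI impI)
    fix i i' assume "w i = w i'"
    then have "w i' \<in> cyc_closure {w i}" by (simp add: cyc_closure.base)
    then show "i = i'" using same_L[of i' i] by simp
  qed
  show "small_cancel (1/13) (range w)" unfolding small_cancel_def
  proof (intro ballI allI impI)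
    fix u v u' v' p
    assume u: "u \<in> range w" and v: "v \<in> range w" and u': "u' \<in> cyc_closure {u}"
      and v': "v' \<in> cyc_closure {v}" and pp: "prefix p u' \<and> prefix p v'"
    obtain i where ui: "u = w i" using u by blast
    obtain i' where vi: "v = w i'" using v by blast
    have nat_goal: "u' = v' \<or> 13 * length p < min (length u) (length v)"
    proof (cases "Lf i = Lf i'")
      case True
      then have ii: "i' = i" using injL by (auto dest: injD)
      show ?thesis
      proof (cases "2 * Lf i \<le> length p")
        case True
        then have "u' = v'" using pair_eq[of u' "Lf i" c d "K i" v' p] u' v' pp ii ui vi Lpos Kpos
          by (simp add: wdef)
        then show ?thesis by simp
      next
        case False
        then have "13 * length p < 28 * Lf i" by linarith
        then show ?thesis using big[of i] ii ui vi by simp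
      qed
    next
      case False
      show ?thesis
      proof (cases "Lf i < Lf i'")
        case True
        have "length p \<le> 2 * Lf i"
          using pair_lt[of u' "Lf i" c d "K i" v' "Lf i'" "K i'" p] u' v' pp ui vi True Lpos Kpos cd
          by (simp add: wdef)
        moreover have "28 * Lf i \<le> length (w i')" using big[of i'] True by linarith
        ultimately show ?thesis using big[of i] ui vi Lpos[of i] by simp
      next
        case F: False
        then have T: "Lf i' < Lf i" using False by simp
        have "length p \<le> 2 * Lf i'"
          using pair_lt[of v' "Lf i'" c d "K i'" u' "Lf i" "K i" p] u' v' pp ui vi T Lpos Kpos cd
          by (simp add: wdef)
        moreover have "28 * Lf i' \<le> length (w i)" using big[of i] T by linarith
        ultimately show ?thesis using big[of i'] ui vi Lpos[of i'] by simp
      qed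
    qed
    then show "u' = v' \<or> real (length p) < 1 / 13 * real (min (length u) (length v))"
    proof
      assume "13 * length p < min (length u) (length v)"
      then have "real (13 * length p) < real (min (length u) (length v))" by linarith
      then show ?thesis by simp
    qed simp
  qed
qed

end




locale blk =
  fixes B :: "nat \<Rightarrow> nat set" and Q :: "nat \<Rightarrow> nat" and w :: "nat \<Rightarrow> 'g word" and c d :: 'g
  assumes cover: "\<And>i. \<exists>j. i \<in> B j"
   and disj: "\<And>i j j'. i \<in> B j \<Longrightarrow> i \<in> B j' \<Longrightarrow> j = j'"
   and fin: "\<And>j. finite (B j)" and ne: "\<And>j. B j \<noteq> {}"
   and rle: "\<And>i j. i \<in> B j \<Longrightarrow> i - Min (B j) \<le> Q j"
   and sep: "\<And>i' j j'. j < j' \<Longrightarrow> i' \<in> B j' \<Longrightarrow> Q j < Q j' - (i' - Min (B j'))"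
   and wdef: "\<forall>j. \<forall>i\<in>B j. w i = wpow (replicate (14^(Q j - (i - Min (B j)))) (Gen c)
        @ replicate (14^(Q j - (i - Min (B j)))) (Gen d)) (14^(i - Min (B j) + 1))"
   and cd: "c \<noteq> d"
begin

definition J :: "nat \<Rightarrow> nat" where "J i = (THE j. i \<in> B j)"
definition R :: "nat \<Rightarrow> nat" where "R i = i - Min (B (J i))"
definition Lf :: "nat \<Rightarrow> nat" where "Lf i = 14 ^ (Q (J i) - R i)"
definition K :: "nat \<Rightarrow> nat" where "K i = 14 ^ (R i + 1)"

lemma J: "i \<in> B j \<Longrightarrow> J i = j"
  unfolding J_def using disj by blast

lemma JB: "i \<in> B (J i)"
  using cover[of i] J by metis

lemma Rle: "R i \<le> Q (J i)" unfolding R_def using rle[OF JB] .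

lemma w_wd: "w i = wd (Lf i) c d (K i)"
  using wdef JB[of i] by (simp add: wd_def Lf_def K_def R_def)

lemma Min_le: "i \<in> B j \<Longrightarrow> Min (B j) \<le> i" using fin by simp

lemma is_fam: "fam w Lf K c d"
proof
  show "w i = wd (Lf i) c d (K i)" for i by (rule w_wd)
  show "0 < Lf i" for i by (simp add: Lf_def)
  show "14 \<le> K i" for i by (simp add: K_def)
  show "c \<noteq> d" by (rule cd)
  show "inj Lf"
  proof (rule injI)
    fix i i' assume "Lf i = Lf i'"
    then have e: "Q (J i) - R i = Q (J i') - R i'" by (simp add: Lf_def)
    consider "J i = J i'" | "J i < J i'" | "J i' < J i" by linarith
    then show "i = i'"
    proof cases
      case 1
      then have "R i = R i'" using e Rle[of i] Rle[of i'] by simp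
      then show ?thesis using 1 Min_le[OF JB[of i]] Min_le[OF JB[of i']] by (simp add: R_def)
    next
      case 2
      have "Q (J i) < Q (J i') - R i'" using sep[OF 2 JB[of i']] by (simp add: R_def)
      then show ?thesis using e by simp
    next
      case 3
      have "Q (J i') < Q (J i) - R i" using sep[OF 3 JB[of i]] by (simp add: R_def)
      then show ?thesis using e by simp
    qed
  qed
qed

lemma lenB: "i \<in> B j \<Longrightarrow> length (w i) = 2 * 14 ^ (Q j + 1)"
proof -
  assume i: "i \<in> B j"
  have "length (w i) = 2 * Lf i * K i" by (simp add: w_wd length_wd)
  also have "\<dots> = 2 * 14 ^ (Q (J i) - R i + (R i + 1))" by (simp add: Lf_def K_def power_add)
  also have "Q (J i) - R i + (R i + 1) = Q (J i) + 1" using Rle[of i] by simp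
  finally show ?thesis using J[OF i] by simp
qed

end

lemma Min_ivl: "a < b \<Longrightarrow> Min {a..<(b::nat)} = a"
  by (intro Min_eqI) auto

lemma blockP_enat: "0 < m \<Longrightarrow> i \<in> blockP (enat m) j \<longleftrightarrow> i div m = j"
proof
  assume m: "0 < m" and i: "i \<in> blockP (enat m) j"
  then show "i div m = j" by (intro div_nat_eqI) (auto simp: algebra_simps)
next
  assume m: "0 < m" and i: "i div m = j"
  have e: "i = j * m + i mod m" using div_mult_mod_eq[of i m] i by simp
  have "i mod m < m" using m by simp
  then show "i \<in> blockP (enat m) j" using e by (simp; linarith)
qed

lemma blk_enat:
  assumes m: "0 < m" and mono: "strict_mono p"
    and pge: "\<forall>j. card (blockP (enat m) j) - 1 \<le> p j"
    and step: "\<forall>j. p j + m \<le> p (j+1)"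
    and wdef: "\<forall>j. \<forall>i\<in>blockP (enat m) j. w i = wpow (replicate (14^(p j - (i - Min (blockP (enat m) j)))) (Gen c)
        @ replicate (14^(p j - (i - Min (blockP (enat m) j)))) (Gen d)) (14^(i - Min (blockP (enat m) j) + 1))"
    and cd: "c \<noteq> d"
  shows "blk (blockP (enat m)) p w c d"
proof
  have Mn: "Min (blockP (enat m) j) = j * m" for j using m by (simp add: Min_ivl)
  have pm: "m - 1 \<le> p j" for j using pge[rule_format, of j] by simp
  show "\<exists>j. i \<in> blockP (enat m) j" for i using blockP_enat[OF m] by blast
  show "j = j'" if "i \<in> blockP (enat m) j" "i \<in> blockP (enat m) j'" for i j j'
    using that by (auto simp only: blockP_enat[OF m])
  show "finite (blockP (enat m) j)" for j by simp
  show "blockP (enat m) j \<noteq> {}" for j using m by simp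
  show "i - Min (blockP (enat m) j) \<le> p j" if "i \<in> blockP (enat m) j" for i j
    using that pm[of j] m by (simp add: Min_ivl, linarith)
  show "p j < p j' - (i' - Min (blockP (enat m) j'))" if "j < j'" "i' \<in> blockP (enat m) j'" for i' j j'
  proof -
    have "p (j+1) \<le> p j'" using that(1) mono by (simp add: strict_mono_less_eq)
    then have "p j + m \<le> p j'" using step by (meson order_trans)
    moreover have "i' - j' * m < m" using that(2) by (simp, linarith)
    moreover have "Min (blockP (enat m) j') = j' * m" by (rule Mn)
    ultimately show ?thesis by linarith
  qed
qed (fact wdef cd)+

lemma sqrt_block: "(nat \<lfloor>sqrt (real i)\<rfloor>)^2 \<le> i \<and> i < (nat \<lfloor>sqrt (real i)\<rfloor> + 1)^2"
proof -
  define j where "j = nat \<lfloor>sqrt (real i)\<rfloor>"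
  have j1: "real j \<le> sqrt (real i)" unfolding j_def by simp
  have j2: "sqrt (real i) < real j + 1" unfolding j_def by linarith
  have "(real j)^2 \<le> (sqrt (real i))^2" using j1 by (intro power_mono) auto
  then have a: "j^2 \<le> i" by (simp flip: of_nat_power)
  have "\<not> (real j + 1)^2 \<le> real i" using j2 real_le_rsqrt by fastforce
  then have "real i < (real j + 1)^2" by simp
  then have "real i < real ((j+1)^2)" by (simp only: of_nat_power of_nat_add of_nat_1)
  then have b: "i < (j+1)^2" by (metis of_nat_less_iff)
  show ?thesis using a b j_def by simp
qed

lemma sq_disj: "j^2 \<le> (i::nat) \<Longrightarrow> i < (j+1)^2 \<Longrightarrow> j'^2 \<le> i \<Longrightarrow> i < (j'+1)^2 \<Longrightarrow> j = j'"
proof (rule ccontr)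
  assume a: "j^2 \<le> i" "i < (j+1)^2" "j'^2 \<le> i" "i < (j'+1)^2" "j \<noteq> j'"
  show False
  proof (cases "j < j'")
    case True
    then have "(j+1)^2 \<le> j'^2" using power_mono[of "j+1" j' 2] by simp
    then show False using a by linarith
  next
    case False
    then have "(j'+1)^2 \<le> j^2" using a power_mono[of "j'+1" j 2] by simp
    then show False using a by linarith
  qed
qed

lemma blk_inf:
  assumes mono: "strict_mono q"
    and qge: "\<forall>j. card (blockP \<infinity> j) - 1 \<le> q j"
    and step: "\<forall>j. q j + (j+2)^2 \<le> q (j+1)"
    and wdef: "\<forall>j. \<forall>i\<in>blockP \<infinity> j. w i = wpow (replicate (14^(q j - (i - Min (blockP \<infinity> j)))) (Gen c)
        @ replicate (14^(q j - (i - Min (blockP \<infinity> j)))) (Gen d)) (14^(i - Min (blockP \<infinity> j) + 1))"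
    and cd: "c \<noteq> d"
  shows "blk (blockP \<infinity>) q w c d"
proof
  have lt: "j^2 < (j+1)^2" for j :: nat by (simp add: power2_eq_square)
  have Mn: "Min (blockP \<infinity> j) = j^2" for j using lt[of j] by (simp add: Min_ivl)
  have cardB: "card (blockP \<infinity> j) - 1 = (j+1)^2 - j^2 - 1" for j by simp
  show "\<exists>j. i \<in> blockP \<infinity> j" for i using sqrt_block[of i] by auto
  show "j = j'" if "i \<in> blockP \<infinity> j" "i \<in> blockP \<infinity> j'" for i j j'
    using that sq_disj by auto
  show "finite (blockP \<infinity> j)" for j by simp
  show "blockP \<infinity> j \<noteq> {}" for j using lt[of j] by simp
  show "i - Min (blockP \<infinity> j) \<le> q j" if "i \<in> blockP \<infinity> j" for i j
    using that qge[rule_format, of j] lt[of j] by (simp add: Min_ivl, linarith)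
  show "q j < q j' - (i' - Min (blockP \<infinity> j'))" if "j < j'" "i' \<in> blockP \<infinity> j'" for i' j j'
  proof -
    define t where "t = j' - 1"
    have t: "j' = Suc t" and tj: "j \<le> t" using that(1) by (auto simp: t_def)
    have "q j \<le> q t" using tj mono by (simp add: strict_mono_less_eq)
    then have "q j + (t+2)^2 \<le> q j'" using step[rule_format, of t] t by simp
    moreover have "i' - j'^2 < (j'+1)^2 - j'^2" using that(2) by (simp, linarith)
    moreover have "(j'+1)^2 - j'^2 = 2*j' + 1" by (simp add: power2_eq_square)
    moreover have "(t+2)^2 = (j'+1)^2" using t by simp
    moreover have "2*j' + 1 < (j'+1)^2" using t by (simp add: power2_eq_square)
    moreover have "Min (blockP \<infinity> j') = j'^2" by (rule Mn)
    ultimately show ?thesis by linarith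
  qed
qed (fact wdef cd)+




lemma pow_ineq: "A + e \<le> B \<Longrightarrow> 14^e * (2*14^(A+1)) \<le> (2*14^(B+1)::nat)"
proof -
  assume h: "A + e \<le> B"
  have "14^e * (2*14^(A+1)) = 2 * (14::nat)^(A + e + 1)" by (simp add: power_add)
  also have "\<dots> \<le> 2 * 14^(B+1)" using h by (intro mult_le_mono2 power_increasing) auto
  finally show ?thesis .
qed

theorem lemma4p3:
  fixes m :: nat and n :: enat
    and p q :: "nat \<Rightarrow> nat"
    and a x b y :: 'g
    and u v :: "nat \<Rightarrow> 'g word"
  assumes m_pos: "m > 0"
    and mn: "enat m < n"
    and distinct_letters: "distinct [a, x, b, y]"
    and p_inc: "strict_mono p" and p_pos: "\<forall>j. p j > 0"
    and q_inc: "strict_mono q" and q_pos: "\<forall>j. q j > 0"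
    and p_ge: "\<forall>j. card (blockP (enat m) j) - 1 \<le> p j"
    and q_ge: "\<forall>j. card (blockP n j) - 1 \<le> q j"
    and u_def: "\<forall>j. \<forall>i \<in> blockP (enat m) j.
       u i = wpow (replicate (14 ^ (p j - (i - Min (blockP (enat m) j)))) (Gen a)
                 @ replicate (14 ^ (p j - (i - Min (blockP (enat m) j)))) (Gen x))
               (14 ^ (i - Min (blockP (enat m) j) + 1))"
    and v_def: "\<forall>j. \<forall>i \<in> blockP n j.
       v i = wpow (replicate (14 ^ (q j - (i - Min (blockP n j)))) (Gen b)
                 @ replicate (14 ^ (q j - (i - Min (blockP n j)))) (Gen y))
               (14 ^ (i - Min (blockP n j) + 1))"
    and hyp_a: "\<forall>j. p (j + 1) \<ge> p j + (j + 2) * m"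
    and hyp_b: "(\<forall>n'. n = enat n' \<longrightarrow> (\<forall>j. q (j + 1) \<ge> q j + (j + 2) * n'))
              \<and> (n = \<infinity> \<longrightarrow> (\<forall>j. q (j + 1) \<ge> q j + (j + 2) ^ 2))"
    and hyp_c: "(\<forall>n'. n = enat n' \<longrightarrow> (\<forall>i. p (i div m) \<le> q (i div n')))
              \<and> (n = \<infinity> \<longrightarrow> (\<forall>i. p (i div m) \<le> q (nat \<lfloor>sqrt (real i)\<rfloor>)))"
  shows
    "cyc_minimal (range u) \<and> cyc_reduced (range u) \<and> small_cancel (1/13) (range u)
     \<and> cyc_minimal (range v) \<and> cyc_reduced (range v) \<and> small_cancel (1/13) (range v)
     \<and> (\<forall>h::int. \<forall>i. \<forall>pc. is_piece pc (gpow y h) (v i)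
            \<longrightarrow> real (length pc) < (1/13) * real (length (v i)))
     \<and> (\<forall>i. 2 \<le> length (u i) \<and> length (u i) \<le> length (v i))
     \<and> (\<forall>i i'. u i = u i' \<longrightarrow> i = i')
     \<and> (\<forall>i i'. v i = v i' \<longrightarrow> i = i')
     \<and> (\<forall>j. \<forall>i \<in> blockP (enat m) j. \<forall>i' \<in> blockP (enat m) j. length (u i) = length (u i'))
     \<and> (\<forall>j. \<forall>i \<in> blockP n j. \<forall>i' \<in> blockP n j. length (v i) = length (v i'))
     \<and> (\<forall>j. length (u ((j + 1) * m)) \<ge> 14 ^ ((j + 1) * m) * length (u (j * m)))
     \<and> (\<forall>n'. n = enat n' \<longrightarrow>
          (\<forall>j. length (v ((j + 1) * n')) \<ge> 14 ^ ((j + 1) * n') * length (v (j * n'))))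
     \<and> (n = \<infinity> \<longrightarrow>
          (\<forall>j. length (v ((j + 1) ^ 2)) \<ge> 14 ^ ((j + 1) ^ 2) * length (v (j ^ 2))))"
proof -
  have ax: "a \<noteq> x" and b_y: "b \<noteq> y" using distinct_letters by auto
  have hypa': "\<forall>j. p j + m \<le> p (j+1)"
  proof
    fix j have "m \<le> (j+2)*m" by simp
    then show "p j + m \<le> p (j+1)" using hyp_a[rule_format, of j] by linarith
  qed
  have UB: "blk (blockP (enat m)) p u a x" by (rule blk_enat[OF m_pos p_inc p_ge hypa' u_def ax])
  have VB: "blk (blockP n) q v b y"
  proof (cases n)
    case (enat n')
    have np: "0 < n'" using mn enat m_pos by simp
    have hb: "\<forall>j. q j + n' \<le> q (j+1)"
    proof
      fix j have "n' \<le> (j+2)*n'" by simp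
      moreover have "q j + (j+2)*n' \<le> q (j+1)" using hyp_b enat by simp
      ultimately show "q j + n' \<le> q (j+1)" by linarith
    qed
    show ?thesis using blk_enat[OF np q_inc _ hb _ b_y] q_ge v_def enat by simp
  next
    case infinity
    show ?thesis using blk_inf[OF q_inc _ _ _ b_y] q_ge v_def hyp_b infinity by simp
  qed
  interpret U: blk "blockP (enat m)" p u a x by (rule UB)
  interpret V: blk "blockP n" q v b y by (rule VB)
  interpret UF: fam u U.Lf U.K a x by (rule U.is_fam)
  interpret VF: fam v V.Lf V.K b y by (rule V.is_fam)
  have UJ: "U.J i = i div m" for i using U.J blockP_enat[OF m_pos] by blast
  have ulen: "length (u i) = 2 * 14 ^ (p (i div m) + 1)" for i
    using U.lenB[OF U.JB[of i]] UJ by simp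
  have vlen: "length (v i) = 2 * 14 ^ (q (V.J i) + 1)" for i
    using V.lenB[OF V.JB[of i]] by simp
  have pq: "p (i div m) \<le> q (V.J i)" for i
  proof (cases n)
    case (enat n')
    have np: "0 < n'" using mn enat m_pos by simp
    have "i \<in> blockP n (i div n')" by (simp only: enat blockP_enat[OF np])
    then have "V.J i = i div n'" by (rule V.J)
    then show ?thesis using hyp_c enat by simp
  next
    case infinity
    have "V.J i = nat \<lfloor>sqrt (real i)\<rfloor>" using V.J[of i] sqrt_block[of i] infinity by simp
    then show ?thesis using hyp_c infinity by simp
  qed
  have c_len: "\<forall>i. 2 \<le> length (u i) \<and> length (u i) \<le> length (v i)"
  proof
    fix i
    have "(14::nat) ^ (p (i div m) + 1) \<le> 14 ^ (q (V.J i) + 1)"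
      using pq[of i] by (intro power_increasing) auto
    then show "2 \<le> length (u i) \<and> length (u i) \<le> length (v i)"
      unfolding ulen vlen by simp
  qed
  have c_piece: "\<forall>h::int. \<forall>i. \<forall>pc. is_piece pc (gpow y h) (v i)
            \<longrightarrow> real (length pc) < (1/13) * real (length (v i))"
  proof (intro allI impI)
    fix h :: int and i pc assume "is_piece pc (gpow y h) (v i)"
    then obtain u' v' where u': "u' \<in> cyc_closure {gpow y h}" and v': "v' \<in> cyc_closure {v i}"
      and pp: "prefix pc u'" "prefix pc v'" unfolding is_piece_def by blast
    have "length pc \<le> V.Lf i"
      using piece_y[OF u' _ VF.Lpos VF.Kpos b_y pp(1)] v' pp(2) by (simp add: V.w_wd)
    then have "13 * length pc < length (v i)" using VF.big[of i] VF.Lpos[of i] by linarith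
    then have "real (13 * length pc) < real (length (v i))" by linarith
    then show "real (length pc) < (1/13) * real (length (v i))" by simp
  qed
  have c_u6: "\<forall>j. length (u ((j + 1) * m)) \<ge> 14 ^ ((j + 1) * m) * length (u (j * m))"
  proof
    fix j
    have "p j + (j+1)*m \<le> p (j+1)" using hyp_a[rule_format, of j] by simp
    then show "length (u ((j + 1) * m)) \<ge> 14 ^ ((j + 1) * m) * length (u (j * m))"
    proof -
      have e1: "(j+1)*m div m = j+1" and e0: "j*m div m = j" using m_pos by simp_all
      show ?thesis unfolding ulen e1 e0 by (rule pow_ineq) fact
    qed
  qed
  have c_v6: "\<forall>n'. n = enat n' \<longrightarrow>
          (\<forall>j. length (v ((j + 1) * n')) \<ge> 14 ^ ((j + 1) * n') * length (v (j * n')))"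
  proof (intro allI impI)
    fix n' j assume e: "n = enat n'"
    have np: "0 < n'" using mn e m_pos by simp
    have J1: "V.J ((j+1)*n') = j+1" using V.J blockP_enat[OF np] e np by simp
    have J0: "V.J (j*n') = j" using V.J blockP_enat[OF np] e np by simp
    have h: "q j + (j+2)*n' \<le> q (j+1)" using hyp_b e by simp
    have "(j+1)*n' \<le> (j+2)*n'" by simp
    then have "q j + (j+1)*n' \<le> q (j+1)" using h by linarith
    then show "length (v ((j + 1) * n')) \<ge> 14 ^ ((j + 1) * n') * length (v (j * n'))"
      unfolding vlen J1 J0 by (rule pow_ineq)
  qed
  have c_vinf: "n = \<infinity> \<longrightarrow>
          (\<forall>j. length (v ((j + 1) ^ 2)) \<ge> 14 ^ ((j + 1) ^ 2) * length (v (j ^ 2)))"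
  proof (intro allI impI)
    fix j assume e: "n = \<infinity>"
    have lt: "k^2 < (k+1)^2" for k :: nat by (simp add: power2_eq_square)
    have J1: "V.J ((j+1)^2) = j+1" using V.J[of "(j+1)^2" "j+1"] e lt[of "j+1"] by simp
    have J0: "V.J (j^2) = j" using V.J[of "j^2" j] e lt[of j] by simp
    have "(j+1)^2 \<le> (j+2)^2" by (intro power_mono) auto
    moreover have "q j + (j+2)^2 \<le> q (j+1)" using hyp_b e by simp
    ultimately have "q j + (j+1)^2 \<le> q (j+1)" by linarith
    then show "length (v ((j + 1)^2)) \<ge> 14 ^ ((j + 1)^2) * length (v (j^2))"
      unfolding vlen J1 J0 by (rule pow_ineq)
  qed
  have c_ublk: "\<forall>j. \<forall>i \<in> blockP (enat m) j. \<forall>i' \<in> blockP (enat m) j. length (u i) = length (u i')"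
    using U.lenB by simp
  have c_vblk: "\<forall>j. \<forall>i \<in> blockP n j. \<forall>i' \<in> blockP n j. length (v i) = length (v i')"
    using V.lenB by simp
  show ?thesis using UF.results VF.results c_len c_piece c_u6 c_v6 c_vinf c_ublk c_vblk by blast
qed


end
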